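(* Let $k\ge 2$ and let $K>0$, $\sigma>0$, $0<d_0<d_1$, $0<\beta\le \tfrac12$, and let $\theta$ be a positive even integer. Consider agents with positions $x_i(t)\in\mathbb{R}^n$ and velocities $v_i(t)\in\mathbb{R}^n$, $i=1,\dots,k$, evolving by $$\dot x_i=v_i,\qquad \dot v_i=\sum_{j=1}^k a_{ij}(x)(v_j-v_i)+\Lambda(v)\sum_{j\neq i} f_0(\|x_i-x_j\|^2)(x_i-x_j)+\Lambda(v)\sum_{j\ne i} f_1(\|x_i-x_j\|^2)(x_j-x_i),$$ where $$a_{ij}(x)=\frac{K}{(\sigma^2+\|x_i-x_j\|^2)^{\beta}},\quad \Lambda(v)=\Big(\frac1k\sum_{i>j}\|v_i-v_j\|^2\Big)^{1/2},\quad f_0(r)=\frac{1}{(r-d_0)^{\theta}},\quad f_1(r)=\frac{1}{(r-d_1)^{\theta}}.$$ Suppose the initial positions satisfy $d_0<\|x_i(0)-x_j(0)\|^2<d_1$ for all $i\neq j$, and let $(x(t),v(t))$ be a solution defined for all $t\ge 0$. Then for all $t\ge 0$ and all $i\ne j$, $$d_0<\|x_i(t)-x_j(t)\|^2<d_1 .$$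
   Context: $\|\cdot\|$ is the Euclidean norm. The term $\sum_j a_{ij}(x)(v_j-v_i)$ is the alignment term, the $f_0$ term the separation term, and the $f_1$ term the cohesion term. Note $\Lambda(v)$ equals $\big(\sum_{i=1}^k\|v_i-\bar v\|^2\big)^{1/2}$ with $\bar v=\frac1k\sum_i v_i$ the average velocity. *)

theory Defs
  imports "HOL-Analysis.Analysis"
begin

text \<open>Agents are indexed by 0..k-1. Positions/velocities are functions
  nat \<Rightarrow> 'a, where 'a is an arbitrary Euclidean space (R^n).\<close>

definition align_weight :: "real \<Rightarrow> real \<Rightarrow> real \<Rightarrow> 'a::euclidean_space \<Rightarrow> 'a \<Rightarrow> real" where
  "align_weight K \<sigma> \<beta> xi xj = K / (\<sigma>\<^sup>2 + (norm (xi - xj))\<^sup>2) powr \<beta>"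

definition Lam :: "nat \<Rightarrow> (nat \<Rightarrow> 'a::euclidean_space) \<Rightarrow> real" where
  "Lam k v = sqrt ((1 / real k) * (\<Sum>i<k. \<Sum>j<i. (norm (v i - v j))\<^sup>2))"

definition fpot :: "real \<Rightarrow> nat \<Rightarrow> real \<Rightarrow> real" where
  "fpot d \<theta> r = 1 / (r - d) ^ \<theta>"

definition flock_rhs ::
  "nat \<Rightarrow> real \<Rightarrow> real \<Rightarrow> real \<Rightarrow> real \<Rightarrow> real \<Rightarrow> nat \<Rightarrow>
   (nat \<Rightarrow> 'a::euclidean_space) \<Rightarrow> (nat \<Rightarrow> 'a) \<Rightarrow> nat \<Rightarrow> 'a" where
  "flock_rhs k K \<sigma> \<beta> d0 d1 \<theta> x v i =
     (\<Sum>j<k. align_weight K \<sigma> \<beta> (x i) (x j) *\<^sub>R (v j - v i))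
     + Lam k v *\<^sub>R (\<Sum>j\<in>{..<k} - {i}. fpot d0 \<theta> ((norm (x i - x j))\<^sup>2) *\<^sub>R (x i - x j))
     + Lam k v *\<^sub>R (\<Sum>j\<in>{..<k} - {i}. fpot d1 \<theta> ((norm (x i - x j))\<^sup>2) *\<^sub>R (x j - x i))"

end

theory Submission
  imports Defs
begin


lemma dsum_swap: "(\<Sum>i<k. \<Sum>j<k. g i j) = (\<Sum>i<k. \<Sum>j<k. g j i)"
  by (rule sum.swap)

lemma dsum_antisym_zero:
  fixes g :: "nat \<Rightarrow> nat \<Rightarrow> 'a::real_vector"
  assumes "\<And>i j. g j i = - g i j"
  shows "(\<Sum>i<k. \<Sum>j<k. g i j) = 0"
proof -
  have "(\<Sum>i<k. \<Sum>j<k. g i j) = (\<Sum>i<k. \<Sum>j<k. g j i)" by (rule sum.swap)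
  also have "\<dots> = (\<Sum>i<k. \<Sum>j<k. - g i j)" by (intro sum.cong refl assms)
  also have "\<dots> = - (\<Sum>i<k. \<Sum>j<k. g i j)" by (simp only: sum_negf)
  finally have h: "(\<Sum>i<k. \<Sum>j<k. g i j) = - (\<Sum>i<k. \<Sum>j<k. g i j)" .
  have "(2::real) *\<^sub>R (\<Sum>i<k. \<Sum>j<k. g i j) = 0"
    by (metis h scaleR_2 add.right_inverse)
  then show ?thesis by simp
qed

lemma dsum_sym_half:
  fixes g :: "nat \<Rightarrow> nat \<Rightarrow> real"
  shows "(\<Sum>i<k. \<Sum>j<k. g i j) = (1/2) * (\<Sum>i<k. \<Sum>j<k. g i j + g j i)"
proof -
  have "(\<Sum>i<k. \<Sum>j<k. g i j + g j i) = (\<Sum>i<k. \<Sum>j<k. g i j) + (\<Sum>i<k. \<Sum>j<k. g j i)"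
    by (simp add: sum.distrib)
  also have "(\<Sum>i<k. \<Sum>j<k. g j i) = (\<Sum>i<k. \<Sum>j<k. g i j)" by (rule sum.swap)
  finally show ?thesis by simp
qed

definition acc :: "nat \<Rightarrow> (nat\<Rightarrow>nat\<Rightarrow>real) \<Rightarrow> (nat\<Rightarrow>nat\<Rightarrow>real) \<Rightarrow> real \<Rightarrow> (nat\<Rightarrow>'a::real_inner) \<Rightarrow> (nat \<Rightarrow> 'a) \<Rightarrow> nat \<Rightarrow> 'a" where
  "acc k A c L v y i = (\<Sum>j<k. A i j *\<^sub>R (v j - v i)) + L *\<^sub>R (\<Sum>j<k. c i j *\<^sub>R (y i - y j))"

context
  fixes k :: nat and A c :: "nat \<Rightarrow> nat \<Rightarrow> real" and L :: real
    and v y :: "nat \<Rightarrow> 'a::real_inner"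
  assumes Asym: "\<And>i j. A j i = A i j" and csym: "\<And>i j. c j i = c i j"
begin


lemma acc_sum_zero: "(\<Sum>i<k. acc k A c L v y i) = 0"
proof -
  have 1: "(\<Sum>i<k. \<Sum>j<k. A i j *\<^sub>R (v j - v i)) = 0"
    by (rule dsum_antisym_zero) (metis Asym minus_diff_eq scaleR_minus_right)
  have 2: "(\<Sum>i<k. \<Sum>j<k. c i j *\<^sub>R (y i - y j)) = 0"
    by (rule dsum_antisym_zero) (metis csym minus_diff_eq scaleR_minus_right)
  show ?thesis unfolding acc_def using 1 2
    by (simp add: sum.distrib scaleR_sum_right[symmetric])
qed

lemma vdot_acc:
  "(\<Sum>i<k. v i \<bullet> acc k A c L v y i) = -(1/2) * (\<Sum>i<k. \<Sum>j<k. A i j * (norm (v i - v j))\<^sup>2)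
     + L/2 * (\<Sum>i<k. \<Sum>j<k. c i j * ((y i - y j) \<bullet> (v i - v j)))"
proof -
  have e1: "(\<Sum>i<k. v i \<bullet> (\<Sum>j<k. A i j *\<^sub>R (v j - v i)))
       = (\<Sum>i<k. \<Sum>j<k. A i j * (v i \<bullet> (v j - v i)))"
    by (simp add: inner_sum_right)
  also have "\<dots> = (1/2) * (\<Sum>i<k. \<Sum>j<k. A i j * (v i \<bullet> (v j - v i)) + A j i * (v j \<bullet> (v i - v j)))"
    by (rule dsum_sym_half)
  also have "\<dots> = (1/2) * (\<Sum>i<k. \<Sum>j<k. - (A i j * (norm (v i - v j))\<^sup>2))"
    apply (rule arg_cong[where f="\<lambda>x. 1/2 * x"], rule sum.cong[OF refl], rule sum.cong[OF refl])
    apply (simp only: Asym[of _ i for i])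
    by (simp add: power2_norm_eq_inner algebra_simps inner_diff_left inner_diff_right inner_commute)
  finally have E1: "(\<Sum>i<k. v i \<bullet> (\<Sum>j<k. A i j *\<^sub>R (v j - v i))) = -(1/2) * (\<Sum>i<k. \<Sum>j<k. A i j * (norm (v i - v j))\<^sup>2)"
    by (simp add: sum_negf)
  have "(\<Sum>i<k. v i \<bullet> (\<Sum>j<k. c i j *\<^sub>R (y i - y j)))
       = (\<Sum>i<k. \<Sum>j<k. c i j * (v i \<bullet> (y i - y j)))"
    by (simp add: inner_sum_right)
  also have "\<dots> = (1/2) * (\<Sum>i<k. \<Sum>j<k. c i j * (v i \<bullet> (y i - y j)) + c j i * (v j \<bullet> (y j - y i)))"
    by (rule dsum_sym_half)
  also have "\<dots> = (1/2) * (\<Sum>i<k. \<Sum>j<k. c i j * ((y i - y j) \<bullet> (v i - v j)))"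
    apply (rule arg_cong[where f="\<lambda>x. 1/2 * x"], rule sum.cong[OF refl], rule sum.cong[OF refl])
    apply (simp only: csym[of _ i for i])
    by (simp add: algebra_simps inner_diff_left inner_diff_right inner_commute)
  finally have E2: "(\<Sum>i<k. v i \<bullet> (\<Sum>j<k. c i j *\<^sub>R (y i - y j))) = (1/2) * (\<Sum>i<k. \<Sum>j<k. c i j * ((y i - y j) \<bullet> (v i - v j)))" .
  show ?thesis
  proof -
    have "(\<Sum>i<k. v i \<bullet> acc k A c L v y i) = (\<Sum>i<k. v i \<bullet> (\<Sum>j<k. A i j *\<^sub>R (v j - v i)))
       + L * (\<Sum>i<k. v i \<bullet> (\<Sum>j<k. c i j *\<^sub>R (y i - y j)))"
      unfolding acc_def inner_add_right inner_scaleR_right sum.distrib sum_distrib_left ..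
    then show ?thesis using E1 E2 by simp
  qed
qed

end

lemma pair_expand:
  fixes v a :: "nat \<Rightarrow> 'a::real_inner"
  shows "(\<Sum>i<k. \<Sum>j<k. (v i - v j) \<bullet> (a i - a j)) = 2 * real k * (\<Sum>i<k. v i \<bullet> a i) - 2 * ((\<Sum>i<k. v i) \<bullet> (\<Sum>i<k. a i))"
proof -
  have "(\<Sum>i<k. \<Sum>j<k. (v i - v j) \<bullet> (a i - a j)) =
     (\<Sum>i<k. \<Sum>j<k. v i \<bullet> a i + v j \<bullet> a j - v i \<bullet> a j - v j \<bullet> a i)"
    by (simp add: inner_diff_left inner_diff_right algebra_simps)
  also have "\<dots> = (\<Sum>i<k. \<Sum>j<k. v i \<bullet> a i) + (\<Sum>i<k. \<Sum>j<k. v j \<bullet> a j)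
      - (\<Sum>i<k. \<Sum>j<k. v i \<bullet> a j) - (\<Sum>i<k. \<Sum>j<k. v j \<bullet> a i)"
    by (simp only: sum.distrib sum_subtractf)
  also have "(\<Sum>i<k. \<Sum>j<k. v i \<bullet> a i) = real k * (\<Sum>i<k. v i \<bullet> a i)"
    by (simp add: sum_distrib_left)
  also have "(\<Sum>i<k. \<Sum>j<k. v j \<bullet> a j) = real k * (\<Sum>i<k. v i \<bullet> a i)"
    by simp
  also have "(\<Sum>i<k. \<Sum>j<k. v j \<bullet> a i) = (\<Sum>i<k. \<Sum>j<k. v i \<bullet> a j)" by (rule sum.swap)
  also have "(\<Sum>i<k. \<Sum>j<k. v i \<bullet> a j) = (\<Sum>i<k. v i) \<bullet> (\<Sum>i<k. a i)"
    by (simp add: inner_sum_left inner_sum_right) (rule sum.swap)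
  finally show ?thesis by simp
qed

lemma half_sum:
  fixes g :: "nat \<Rightarrow> nat \<Rightarrow> real"
  shows "(\<Sum>i<k. \<Sum>j<k. g i j) = (\<Sum>i<k. \<Sum>j<i. g i j) + (\<Sum>i<k. \<Sum>j<i. g j i) + (\<Sum>i<k. g i i)"
proof (induction k)
  case 0 then show ?case by simp
next
  case (Suc k)
  then show ?case by (simp add: sum.distrib)
qed



definition psi :: "real \<Rightarrow> real \<Rightarrow> nat \<Rightarrow> real \<Rightarrow> real" where
  "psi d0 d1 \<theta> r = (1 / (r - d0) ^ (\<theta> - 1) + 1 / (d1 - r) ^ (\<theta> - 1)) / real (\<theta> - 1)"

lemma pow_aux:
  fixes u :: real assumes "u > 0" "m \<ge> 1"
  shows "inverse (u ^ m) * (real m * (u ^ (m - Suc 0))) * inverse (u ^ m) = real m / u ^ Suc m"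
proof -
  obtain n where n: "m = Suc n" using assms by (cases m) auto
  show ?thesis using assms(1) unfolding n by (simp add: field_simps)
qed

lemma psi_deriv:
  assumes "d0 < r" "r < d1" "\<theta> \<ge> 2" "even \<theta>"
  shows "(psi d0 d1 \<theta> has_real_derivative (fpot d1 \<theta> r - fpot d0 \<theta> r)) (at r)"
proof -
  obtain m where m: "\<theta> = Suc m" "m \<ge> 1" using assms(3) by (cases \<theta>) auto
  have a: "r - d0 > 0" "d1 - r > 0" using assms by auto
  have ev: "(r - d1) ^ \<theta> = (d1 - r) ^ \<theta>"
    using assms(4) by (metis minus_diff_eq power_minus_even)
  have d1: "((\<lambda>r. 1 / (r - d0) ^ m) has_real_derivative (- (real m / (r - d0) ^ Suc m))) (at r)"
  proof -
    have F: "((\<lambda>r. inverse ((r - d0) ^ m)) has_real_derivative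
       - (inverse ((r - d0) ^ m) * (real m * (1 * (r - d0) ^ (m - Suc 0))) * inverse ((r - d0) ^ m))) (at r)"
      using a by (auto intro!: derivative_eq_intros)
    have E: "- (inverse ((r - d0) ^ m) * (real m * (1 * (r - d0) ^ (m - Suc 0))) * inverse ((r - d0) ^ m))
        = - (real m / (r - d0) ^ Suc m)"
      using pow_aux[of "r - d0" m] a m by simp
    show ?thesis using F[unfolded E] by (simp only: inverse_eq_divide)
  qed
  have d2: "((\<lambda>r. 1 / (d1 - r) ^ m) has_real_derivative (real m / (d1 - r) ^ Suc m)) (at r)"
  proof -
    have F: "((\<lambda>r. inverse ((d1 - r) ^ m)) has_real_derivative
       - (inverse ((d1 - r) ^ m) * (real m * ((0 - 1) * (d1 - r) ^ (m - Suc 0))) * inverse ((d1 - r) ^ m))) (at r)"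
      using a by (auto intro!: derivative_eq_intros)
    have E: "- (inverse ((d1 - r) ^ m) * (real m * ((0 - 1) * (d1 - r) ^ (m - Suc 0))) * inverse ((d1 - r) ^ m))
        = (real m / (d1 - r) ^ Suc m)"
      using pow_aux[of "d1 - r" m] a m by simp
    show ?thesis using F[unfolded E] by (simp only: inverse_eq_divide)
  qed
  have "(psi d0 d1 \<theta> has_real_derivative ((- (real m / (r - d0) ^ Suc m)) + real m / (d1 - r) ^ Suc m) / real m) (at r)"
    unfolding psi_def m(1) diff_Suc_1 by (intro DERIV_cdivide DERIV_add d1 d2)
  moreover have "((- (real m / (r - d0) ^ Suc m)) + real m / (d1 - r) ^ Suc m) / real m = fpot d1 \<theta> r - fpot d0 \<theta> r"
  proof -
    have f1: "fpot d1 \<theta> r = 1 / (d1 - r) ^ Suc m" unfolding fpot_def ev by (simp only: m(1))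
    have f0: "fpot d0 \<theta> r = 1 / (r - d0) ^ Suc m" unfolding fpot_def m(1) ..
    have "real m > 0" using m by simp
    moreover have "(r - d0) ^ Suc m > 0" "(d1 - r) ^ Suc m > 0" using a by simp_all
    moreover have "\<And>a b c::real. c > 0 \<Longrightarrow> a > 0 \<Longrightarrow> b > 0 \<Longrightarrow> (- (c / a) + c / b) / c = 1 / b - 1 / a"
      by (simp add: field_simps)
    ultimately show ?thesis unfolding f0 f1 by blast
  qed
  ultimately show ?thesis by simp
qed

lemma psi_nonneg: "d0 < r \<Longrightarrow> r < d1 \<Longrightarrow> psi d0 d1 \<theta> r \<ge> 0"
  unfolding psi_def by (auto intro!: divide_nonneg_nonneg add_nonneg_nonneg)

lemma psi_bound:
  assumes "d0 < r" "r < d1" "\<theta> \<ge> 2" "psi d0 d1 \<theta> r \<le> M"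
  shows "M > 0" "1 / (M * real (\<theta> - 1)) \<le> (r - d0) ^ (\<theta> - 1)"
        "1 / (M * real (\<theta> - 1)) \<le> (d1 - r) ^ (\<theta> - 1)"
proof -
  have m: "real (\<theta> - 1) > 0" using assms by auto
  have p1: "(r - d0) ^ (\<theta> - 1) > 0" "(d1 - r) ^ (\<theta> - 1) > 0" using assms by auto
  have "1 / (r - d0) ^ (\<theta> - 1) / real (\<theta> - 1) \<le> psi d0 d1 \<theta> r"
    unfolding psi_def using m p1 by (simp add: divide_right_mono add_divide_distrib)
  hence A: "1 / (r - d0) ^ (\<theta> - 1) / real (\<theta> - 1) \<le> M" using assms by linarith
  have "1 / (d1 - r) ^ (\<theta> - 1) / real (\<theta> - 1) \<le> psi d0 d1 \<theta> r"
    unfolding psi_def using m p1 by (simp add: divide_right_mono add_divide_distrib)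
  hence B: "1 / (d1 - r) ^ (\<theta> - 1) / real (\<theta> - 1) \<le> M" using assms by linarith
  have "1 / (r - d0) ^ (\<theta> - 1) / real (\<theta> - 1) > 0" using m p1 by simp
  thus "M > 0" using A by (rule less_le_trans)
  show "1 / (M * real (\<theta> - 1)) \<le> (r - d0) ^ (\<theta> - 1)"
    using A m p1 `M > 0` by (simp add: field_simps)
  show "1 / (M * real (\<theta> - 1)) \<le> (d1 - r) ^ (\<theta> - 1)"
    using B m p1 `M > 0` by (simp add: field_simps)
qed


lemma key_ineq:
  fixes a b e G Q D :: real
  assumes "a \<ge> 0" "b > 0" "b\<^sup>2 = a\<^sup>2 + e" "e > 0" "\<bar>Q\<bar> \<le> G * a" "D \<ge> 0" "G \<ge> 0"
  shows "inverse b / 2 * (- D + a * Q) + (- (1/2) * Q) - G / 2 * sqrt e \<le> 0"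
proof -
  have G0: "G \<ge> 0 \<or> a = 0"
  proof (rule ccontr)
    assume "\<not> (G \<ge> 0 \<or> a = 0)"
    then have "G < 0" "a > 0" using assms(1) by auto
    then have "G * a < 0" by (simp add: mult_neg_pos)
    then show False using assms(5) by simp
  qed
  have ab: "a \<le> b" using assms by (smt (verit) power2_le_imp_le power_mono)
  have bae: "b \<le> a + sqrt e"
  proof -
    have "b\<^sup>2 \<le> (a + sqrt e)\<^sup>2" using assms by (simp add: power2_sum)
    then show ?thesis using assms by (smt (verit) power2_le_imp_le real_sqrt_ge_zero)
  qed
  have "inverse b / 2 * (- D + a * Q) + (- (1/2) * Q) = - D / (2*b) + Q * (a - b) / (2 * b)"
    using assms(2) by (simp add: field_simps)
  also have "\<dots> \<le> Q * (a - b) / (2 * b)" using assms by simp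
  also have "\<dots> \<le> \<bar>Q\<bar> * (b - a) / (2 * b)"
  proof (intro divide_right_mono)
    have "Q * (a - b) = (- Q) * (b - a)" by (simp add: algebra_simps)
    also have "\<dots> \<le> \<bar>Q\<bar> * (b - a)" using ab by (intro mult_right_mono) auto
    finally show "Q * (a - b) \<le> \<bar>Q\<bar> * (b - a)" .
  qed (use assms in auto)
  also have "\<dots> \<le> G * a * (b - a) / (2 * b)"
    using assms ab by (intro divide_right_mono mult_right_mono) auto
  also have "\<dots> \<le> G * (b - a) / 2"
  proof -
    have G: "G \<ge> 0" using assms by simp
    have "G * a * (b - a) \<le> G * b * (b - a)" using G ab assms by (intro mult_right_mono mult_left_mono) auto
    then show ?thesis using assms(2) by (simp add: field_simps)
  qed
  also have "\<dots> \<le> G * sqrt e / 2"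
    using bae ab G0 by (cases "a = 0") (auto intro!: mult_left_mono simp: assms) 
  finally show ?thesis by simp
qed


lemma hvd_inner:
  fixes f g :: "real \<Rightarrow> 'a::real_inner"
  assumes "(f has_vector_derivative f') (at t within S)" "(g has_vector_derivative g') (at t within S)"
  shows "((\<lambda>t. f t \<bullet> g t) has_real_derivative (f' \<bullet> g t + f t \<bullet> g')) (at t within S)"
proof -
  have "((\<lambda>t. f t \<bullet> g t) has_derivative (\<lambda>h. f t \<bullet> (h *\<^sub>R g') + (h *\<^sub>R f') \<bullet> g t)) (at t within S)"
    using assms unfolding has_vector_derivative_def by (rule has_derivative_inner)
  then show ?thesis unfolding has_field_derivative_def
    by (rule has_derivative_eq_rhs) (auto simp: fun_eq_iff algebra_simps)
qed

lemma sum_remove_zero: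
  fixes k :: nat
  assumes "i < k" "g i = 0"
  shows "sum g ({..<k} - {i}) = sum g {..<k}"
proof -
  have "sum g {..<k} = g i + sum g ({..<k} - {i})" using assms(1) by (intro sum.remove) auto
  then show ?thesis using assms(2) by simp
qed

context
  fixes k :: nat and K \<sigma> d0 d1 \<beta> :: real and \<theta> :: nat
    and x v :: "nat \<Rightarrow> real \<Rightarrow> 'a::euclidean_space"
  assumes k2: "k \<ge> 2" and Kpos: "K > 0" and d0pos: "0 < d0" and d01: "d0 < d1"
    and th2: "\<theta> \<ge> 2" and thev: "even \<theta>"
    and dx: "\<And>i t. i < k \<Longrightarrow> t \<ge> 0 \<Longrightarrow>
                 (x i has_vector_derivative v i t) (at t within {0..})"
    and dv: "\<And>i t. i < k \<Longrightarrow> t \<ge> 0 \<Longrightarrow>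
                 (v i has_vector_derivative
                    flock_rhs k K \<sigma> \<beta> d0 d1 \<theta> (\<lambda>j. x j t) (\<lambda>j. v j t) i) (at t within {0..})"
begin

definition "Aw i j t = align_weight K \<sigma> \<beta> (x i t) (x j t)"
definition "cc i j t = fpot d0 \<theta> ((norm (x i t - x j t))\<^sup>2) - fpot d1 \<theta> ((norm (x i t - x j t))\<^sup>2)"
definition "a i t = flock_rhs k K \<sigma> \<beta> d0 d1 \<theta> (\<lambda>j. x j t) (\<lambda>j. v j t) i"
definition "W t = (1 / real k) * (\<Sum>i<k. \<Sum>j<i. (norm (v i t - v j t))\<^sup>2)"
definition "Q t = (\<Sum>i<k. \<Sum>j<k. cc i j t * ((x i t - x j t) \<bullet> (v i t - v j t)))"
definition "D t = (\<Sum>i<k. \<Sum>j<k. Aw i j t * (norm (v i t - v j t))\<^sup>2)"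

lemma Aw_sym: "Aw j i t = Aw i j t"
  unfolding Aw_def align_weight_def by (simp add: norm_minus_commute)

lemma cc_sym: "cc j i t = cc i j t"
  unfolding cc_def by (simp add: norm_minus_commute)

lemma Aw_nonneg: "Aw i j t \<ge> 0"
  unfolding Aw_def align_weight_def using Kpos by simp

lemma D_nonneg: "D t \<ge> 0"
  unfolding D_def by (intro sum_nonneg mult_nonneg_nonneg Aw_nonneg) auto

lemma a_eq: "i < k \<Longrightarrow> a i t = acc k (\<lambda>i j. Aw i j t) (\<lambda>i j. cc i j t) (Lam k (\<lambda>j. v j t)) (\<lambda>j. v j t) (\<lambda>j. x j t) i"
proof -
  assume i: "i < k"
  let ?L = "Lam k (\<lambda>j. v j t)"
  have "(\<Sum>j\<in>{..<k} - {i}. fpot d0 \<theta> ((norm (x i t - x j t))\<^sup>2) *\<^sub>R (x i t - x j t))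
      + (\<Sum>j\<in>{..<k} - {i}. fpot d1 \<theta> ((norm (x i t - x j t))\<^sup>2) *\<^sub>R (x j t - x i t))
      = (\<Sum>j\<in>{..<k} - {i}. cc i j t *\<^sub>R (x i t - x j t))"
    unfolding sum.distrib[symmetric] cc_def
    by (rule sum.cong) (auto simp: algebra_simps)
  also have "\<dots> = (\<Sum>j<k. cc i j t *\<^sub>R (x i t - x j t))"
    using i by (intro sum_remove_zero) auto
  finally have e: "?L *\<^sub>R (\<Sum>j\<in>{..<k} - {i}. fpot d0 \<theta> ((norm (x i t - x j t))\<^sup>2) *\<^sub>R (x i t - x j t))
      + ?L *\<^sub>R (\<Sum>j\<in>{..<k} - {i}. fpot d1 \<theta> ((norm (x i t - x j t))\<^sup>2) *\<^sub>R (x j t - x i t))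
      = ?L *\<^sub>R (\<Sum>j<k. cc i j t *\<^sub>R (x i t - x j t))"
    by (simp only: scaleR_add_right[symmetric])
  show ?thesis
    unfolding a_def flock_rhs_def add.assoc e by (simp add: acc_def Aw_def)
qed

lemma Lam_W: "Lam k (\<lambda>j. v j t) = sqrt (W t)"
  unfolding Lam_def W_def ..

lemma W_full: "W t = (1 / (2 * real k)) * (\<Sum>i<k. \<Sum>j<k. (norm (v i t - v j t))\<^sup>2)"
proof -
  have "(\<Sum>i<k. \<Sum>j<k. (norm (v i t - v j t))\<^sup>2) = 2 * (\<Sum>i<k. \<Sum>j<i. (norm (v i t - v j t))\<^sup>2)"
    using half_sum[of "\<lambda>i j. (norm (v i t - v j t))\<^sup>2" k] by (simp add: norm_minus_commute)
  then show ?thesis unfolding W_def by simp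
qed

lemma W_nonneg: "W t \<ge> 0"
  unfolding W_def by (intro mult_nonneg_nonneg sum_nonneg) auto

lemma sum_a_zero: "(\<Sum>i<k. a i t) = 0"
proof -
  have "(\<Sum>i<k. a i t) = (\<Sum>i<k. acc k (\<lambda>i j. Aw i j t) (\<lambda>i j. cc i j t) (Lam k (\<lambda>j. v j t)) (\<lambda>j. v j t) (\<lambda>j. x j t) i)"
    by (rule sum.cong) (auto simp: a_eq)
  also have "\<dots> = 0" by (rule acc_sum_zero) (auto simp: Aw_sym cc_sym)
  finally show ?thesis .
qed

lemma vdot_a: "2 * (\<Sum>i<k. v i t \<bullet> a i t) = - D t + sqrt (W t) * Q t"
proof -
  have "(\<Sum>i<k. v i t \<bullet> a i t) = (\<Sum>i<k. v i t \<bullet> acc k (\<lambda>i j. Aw i j t) (\<lambda>i j. cc i j t) (Lam k (\<lambda>j. v j t)) (\<lambda>j. v j t) (\<lambda>j. x j t) i)"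
    by (rule sum.cong) (auto simp: a_eq)
  also have "\<dots> = -(1/2) * D t + sqrt (W t) / 2 * Q t"
    unfolding D_def Q_def Lam_W[symmetric]
    by (rule vdot_acc) (auto simp: Aw_sym cc_sym)
  finally show ?thesis by simp
qed

lemma W_deriv:
  assumes "t \<ge> 0"
  shows "(W has_real_derivative (- D t + sqrt (W t) * Q t)) (at t within {0..})"
proof -
  have W_eq: "W = (\<lambda>t. (1 / (2 * real k)) * (\<Sum>i<k. \<Sum>j<k. (v i t - v j t) \<bullet> (v i t - v j t)))"
    by (rule ext) (simp add: W_full power2_norm_eq_inner)
  have "((\<lambda>t. (1 / (2 * real k)) * (\<Sum>i<k. \<Sum>j<k. (v i t - v j t) \<bullet> (v i t - v j t))) has_real_derivative
        (1 / (2 * real k)) * (\<Sum>i<k. \<Sum>j<k. (a i t - a j t) \<bullet> (v i t - v j t) + (v i t - v j t) \<bullet> (a i t - a j t))) (at t within {0..})"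
    apply (intro DERIV_cmult DERIV_sum hvd_inner derivative_intros)
    using dx dv assms by (auto simp: a_def)
  moreover have "(\<Sum>i<k. \<Sum>j<k. (a i t - a j t) \<bullet> (v i t - v j t) + (v i t - v j t) \<bullet> (a i t - a j t))
      = 2 * (\<Sum>i<k. \<Sum>j<k. (v i t - v j t) \<bullet> (a i t - a j t))"
    by (simp add: inner_commute sum_distrib_left)
  moreover have "(\<Sum>i<k. \<Sum>j<k. (v i t - v j t) \<bullet> (a i t - a j t)) = 2 * real k * (\<Sum>i<k. v i t \<bullet> a i t)"
    using pair_expand[of "\<lambda>i. v i t" "\<lambda>i. a i t" k] sum_a_zero[of t] by simp
  ultimately have "(W has_real_derivative 2 * (\<Sum>i<k. v i t \<bullet> a i t)) (at t within {0..})"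
    using k2 unfolding W_eq by (simp add: field_simps)
  then show ?thesis using vdot_a by simp
qed


lemma xc: "i < k \<Longrightarrow> continuous_on {0..} (x i)"
  by (rule continuous_on_vector_derivative) (use dx in auto)

lemma vc: "i < k \<Longrightarrow> continuous_on {0..} (v i)"
  by (rule continuous_on_vector_derivative) (use dv in auto)

definition "r i j t = (norm (x i t - x j t))\<^sup>2"
definition "good t \<longleftrightarrow> (\<forall>i<k. \<forall>j<k. i \<noteq> j \<longrightarrow> d0 < r i j t \<and> r i j t < d1)"
definition "P t = (1/4) * (\<Sum>i<k. \<Sum>j\<in>{..<k} - {i}. psi d0 d1 \<theta> (r i j t))"

lemma rc: "i < k \<Longrightarrow> j < k \<Longrightarrow> continuous_on {0..} (r i j)"
  unfolding r_def[abs_def] by (intro continuous_intros xc)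

lemma r_deriv:
  assumes "i < k" "j < k" "t \<ge> 0"
  shows "(r i j has_real_derivative 2 * ((x i t - x j t) \<bullet> (v i t - v j t))) (at t within {0..})"
proof -
  have e: "r i j = (\<lambda>t. (x i t - x j t) \<bullet> (x i t - x j t))"
    by (rule ext) (simp add: r_def power2_norm_eq_inner)
  have "(r i j has_real_derivative ((v i t - v j t) \<bullet> (x i t - x j t) + (x i t - x j t) \<bullet> (v i t - v j t))) (at t within {0..})"
    unfolding e by (intro hvd_inner derivative_intros dx assms)
  then show ?thesis by (simp add: inner_commute)
qed

lemma P_deriv:
  assumes "t \<ge> 0" "good t"
  shows "(P has_real_derivative (-(1/2) * Q t)) (at t within {0..})"
proof -
  have "(P has_real_derivative (1/4) * (\<Sum>i<k. \<Sum>j\<in>{..<k} - {i}.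
      (fpot d1 \<theta> (r i j t) - fpot d0 \<theta> (r i j t)) * (2 * ((x i t - x j t) \<bullet> (v i t - v j t)))))
      (at t within {0..})"
    unfolding P_def[abs_def]
  proof (intro DERIV_cmult DERIV_sum)
    fix i j assume i: "i \<in> {..<k}" and j: "j \<in> {..<k} - {i}"
    then have "d0 < r i j t" "r i j t < d1" using assms(2) unfolding good_def by auto
    then show "((\<lambda>t. psi d0 d1 \<theta> (r i j t)) has_real_derivative
        (fpot d1 \<theta> (r i j t) - fpot d0 \<theta> (r i j t)) * (2 * ((x i t - x j t) \<bullet> (v i t - v j t)))) (at t within {0..})"
      using i j assms(1) by (intro DERIV_chain2[OF psi_deriv r_deriv] th2 thev) auto
  qed
  moreover have "(1/4) * (\<Sum>i<k. \<Sum>j\<in>{..<k} - {i}.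
      (fpot d1 \<theta> (r i j t) - fpot d0 \<theta> (r i j t)) * (2 * ((x i t - x j t) \<bullet> (v i t - v j t))))
      = -(1/2) * Q t"
  proof -
    have "(\<Sum>i<k. \<Sum>j\<in>{..<k} - {i}.
      (fpot d1 \<theta> (r i j t) - fpot d0 \<theta> (r i j t)) * (2 * ((x i t - x j t) \<bullet> (v i t - v j t))))
      = (\<Sum>i<k. \<Sum>j\<in>{..<k} - {i}. -2 * (cc i j t * ((x i t - x j t) \<bullet> (v i t - v j t))))"
      unfolding cc_def r_def by (intro sum.cong refl) (simp add: algebra_simps)
    also have "\<dots> = (\<Sum>i<k. \<Sum>j<k. -2 * (cc i j t * ((x i t - x j t) \<bullet> (v i t - v j t))))"
      by (intro sum.cong refl sum_remove_zero) auto
    also have "\<dots> = -2 * Q t" unfolding Q_def by (simp add: sum_distrib_left)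
    finally show ?thesis by simp
  qed
  ultimately show ?thesis by simp
qed

lemma fpot_cont:
  assumes "continuous_on S f" "\<And>t. t \<in> S \<Longrightarrow> f t \<noteq> d"
  shows "continuous_on S (\<lambda>t. fpot d \<theta> (f t))"
  unfolding fpot_def using assms by (intro continuous_intros) auto

lemma cc_cont:
  assumes "i < k" "j < k" "s \<ge> 0" "\<forall>\<tau>\<in>{0..s}. good \<tau>"
  shows "continuous_on {0..s} (cc i j)"
proof -
  have r: "continuous_on {0..s} (r i j)" using rc[OF assms(1,2)] by (rule continuous_on_subset) auto
  have ne: "r i j \<tau> \<noteq> d0 \<and> r i j \<tau> \<noteq> d1" if "\<tau> \<in> {0..s}" for \<tau>
  proof (cases "i = j")
    case True then show ?thesis using d0pos d01 by (simp add: r_def)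
  next
    case False then show ?thesis using assms that unfolding good_def by force
  qed
  show ?thesis unfolding cc_def[abs_def] r_def[symmetric]
    by (intro continuous_intros fpot_cont r) (use ne in auto)
qed

lemma key:
  assumes s: "s \<ge> 0" and g: "\<forall>\<tau>\<in>{0..s}. good \<tau>"
  shows "P s \<le> sqrt (W 0) + P 0"
proof -
  define h where "h \<tau> = (\<Sum>i<k. \<Sum>j<k. \<bar>cc i j \<tau>\<bar> * norm (x i \<tau> - x j \<tau>))" for \<tau>
  have hc: "continuous_on {0..s} h"
  proof -
    have "\<And>i. i < k \<Longrightarrow> continuous_on {0..s} (x i)" using xc by (rule continuous_on_subset) auto
    then show ?thesis unfolding h_def
      by (intro continuous_intros cc_cont s g) auto
  qed
  obtain B where B: "\<And>\<tau>. \<tau> \<in> {0..s} \<Longrightarrow> norm (h \<tau>) \<le> B"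
    using compact_continuous_image[OF hc compact_Icc] unfolding bounded_iff[symmetric]
    by (metis compact_imp_bounded bounded_iff image_eqI)
  have B0: "B \<ge> 0" using B[of 0] s by (meson atLeastAtMost_iff norm_ge_zero order.trans order_refl)
  define G where "G = B * sqrt (2 * real k)"
  have G0: "G \<ge> 0" unfolding G_def using B0 by simp
  have Qb: "\<bar>Q \<tau>\<bar> \<le> G * sqrt (W \<tau>)" if "\<tau> \<in> {0..s}" for \<tau>
  proof -
    have vb: "norm (v i \<tau> - v j \<tau>) \<le> sqrt (2 * real k * W \<tau>)" if "i < k" "j < k" for i j
    proof -
      have "(norm (v i \<tau> - v j \<tau>))\<^sup>2 \<le> (\<Sum>j<k. (norm (v i \<tau> - v j \<tau>))\<^sup>2)"
        using that by (intro member_le_sum) auto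
      also have "\<dots> \<le> (\<Sum>i<k. \<Sum>j<k. (norm (v i \<tau> - v j \<tau>))\<^sup>2)"
        using that by (intro member_le_sum[where f="\<lambda>i. \<Sum>j<k. (norm (v i \<tau> - v j \<tau>))\<^sup>2"] sum_nonneg) auto
      also have "\<dots> = 2 * real k * W \<tau>" using k2 by (simp add: W_full)
      finally show ?thesis by (simp add: real_le_rsqrt)
    qed
    have "\<bar>Q \<tau>\<bar> \<le> (\<Sum>i<k. \<Sum>j<k. \<bar>cc i j \<tau> * ((x i \<tau> - x j \<tau>) \<bullet> (v i \<tau> - v j \<tau>))\<bar>)"
      unfolding Q_def by (rule order.trans[OF sum_abs sum_mono[OF sum_abs]])
    also have "\<dots> \<le> (\<Sum>i<k. \<Sum>j<k. \<bar>cc i j \<tau>\<bar> * norm (x i \<tau> - x j \<tau>) * sqrt (2 * real k * W \<tau>))"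
    proof (intro sum_mono)
      fix i j assume "i \<in> {..<k}" "j \<in> {..<k}"
      then have "\<bar>(x i \<tau> - x j \<tau>) \<bullet> (v i \<tau> - v j \<tau>)\<bar> \<le> norm (x i \<tau> - x j \<tau>) * sqrt (2 * real k * W \<tau>)"
        using vb by (meson Cauchy_Schwarz_ineq2 lessThan_iff mult_left_mono norm_ge_zero order.trans)
      then show "\<bar>cc i j \<tau> * ((x i \<tau> - x j \<tau>) \<bullet> (v i \<tau> - v j \<tau>))\<bar>
          \<le> \<bar>cc i j \<tau>\<bar> * norm (x i \<tau> - x j \<tau>) * sqrt (2 * real k * W \<tau>)"
        by (simp add: abs_mult mult.assoc mult_left_mono)
    qed
    also have "\<dots> = h \<tau> * sqrt (2 * real k * W \<tau>)" unfolding h_def by (simp add: sum_distrib_right)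
    also have "\<dots> \<le> B * sqrt (2 * real k * W \<tau>)"
      using B[OF that] W_nonneg[of \<tau>] by (intro mult_right_mono) auto
    also have "\<dots> = G * sqrt (W \<tau>)" unfolding G_def by (simp add: real_sqrt_mult)
    finally show ?thesis .
  qed
  have main: "sqrt (W s + e) + P s - G / 2 * sqrt e * s \<le> sqrt (W 0 + e) + P 0" if e: "e > 0" for e
  proof -
    define U where "U \<tau> = sqrt (W \<tau> + e) + P \<tau> - G / 2 * sqrt e * \<tau>" for \<tau>
    define U' where "U' \<tau> = inverse (sqrt (W \<tau> + e)) / 2 * (- D \<tau> + sqrt (W \<tau>) * Q \<tau>) + (-(1/2) * Q \<tau>) - G / 2 * sqrt e * 1" for \<tau>
    have dU: "(U has_real_derivative U' \<tau>) (at \<tau> within {0..s})" if "\<tau> \<in> {0..s}" for \<tau>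
    proof -
      have t0: "\<tau> \<ge> 0" and gt: "good \<tau>" using that g by auto
      have pos: "W \<tau> + e > 0" using W_nonneg[of \<tau>] e by linarith
      have dWe: "((\<lambda>\<tau>. W \<tau> + e) has_real_derivative (- D \<tau> + sqrt (W \<tau>) * Q \<tau>)) (at \<tau> within {0..})"
        using DERIV_add[OF W_deriv[OF t0] DERIV_const[of e]] by simp
      have dS: "((\<lambda>\<tau>. sqrt (W \<tau> + e)) has_real_derivative
          inverse (sqrt (W \<tau> + e)) / 2 * (- D \<tau> + sqrt (W \<tau>) * Q \<tau>)) (at \<tau> within {0..})"
        by (rule DERIV_chain2[where f=sqrt and g="\<lambda>\<tau>. W \<tau> + e", OF DERIV_real_sqrt[OF pos] dWe])
      have dl: "((\<lambda>\<tau>. G / 2 * sqrt e * \<tau>) has_real_derivative G / 2 * sqrt e * 1) (at \<tau> within {0..})"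
        by (intro DERIV_cmult DERIV_ident)
      have "(U has_real_derivative U' \<tau>) (at \<tau> within {0..})"
        unfolding U_def[abs_def] U'_def
        by (intro DERIV_diff DERIV_add dS P_deriv[OF t0 gt] dl)
      then show ?thesis by (rule DERIV_subset) auto
    qed
    have U'le: "U' \<tau> \<le> 0" if "\<tau> \<in> {0..s}" for \<tau>
      unfolding U'_def mult_1_right
      by (rule key_ineq) (use Qb[OF that] W_nonneg[of \<tau>] D_nonneg[of \<tau>] e G0 in auto)
    obtain \<xi> where "\<xi> \<in> {0..s}" "U s - U 0 = U' \<xi> * (s - 0)"
      using mvt_very_simple[of 0 s U "\<lambda>\<tau> h. U' \<tau> * h"] s dU
      unfolding has_field_derivative_def by auto
    then have "U s \<le> U 0" using U'le[of \<xi>] s by (smt (verit) mult_nonpos_nonneg)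
    then show ?thesis unfolding U_def by simp
  qed
  show ?thesis
  proof (rule field_le_epsilon)
    fix \<delta> :: real assume \<delta>: "\<delta> > 0"
    define e where "e = (\<delta> / (1 + G / 2 * s))\<^sup>2"
    have den: "1 + G / 2 * s > 0" using G0 s by (smt (verit) divide_nonneg_nonneg mult_nonneg_nonneg)
    have e0: "e > 0" unfolding e_def using \<delta> den by simp
    have se: "sqrt e = \<delta> / (1 + G / 2 * s)" unfolding e_def using \<delta> den by simp
    have "P s \<le> sqrt (W 0 + e) + P 0 + G / 2 * sqrt e * s - sqrt (W s + e)"
      using main[OF e0] by simp
    also have "\<dots> \<le> sqrt (W 0) + sqrt e + P 0 + G / 2 * sqrt e * s"
    proof -
      have "sqrt (W s + e) \<ge> 0" using W_nonneg[of s] e0 by simp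
      moreover have "sqrt (W 0 + e) \<le> sqrt (W 0) + sqrt e"
        using sqrt_add_le_add_sqrt[of "W 0" e] W_nonneg[of 0] e0 by simp
      ultimately show ?thesis by linarith
    qed
    also have "sqrt e + G / 2 * sqrt e * s = \<delta>"
    proof -
      have "sqrt e + G / 2 * sqrt e * s = sqrt e * (1 + G / 2 * s)" by (simp add: algebra_simps)
      also have "\<dots> = \<delta>" unfolding se using den by simp
      finally show ?thesis .
    qed
    then have "sqrt (W 0) + sqrt e + P 0 + G / 2 * sqrt e * s = sqrt (W 0) + P 0 + \<delta>" by simp
    finally show "P s \<le> sqrt (W 0) + P 0 + \<delta>" .
  qed
qed


lemma psi_le_P:
  assumes "good t" "i < k" "j < k" "i \<noteq> j"
  shows "psi d0 d1 \<theta> (r i j t) \<le> 4 * P t"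
proof -
  have nn: "\<And>i j. i < k \<Longrightarrow> j \<in> {..<k} - {i} \<Longrightarrow> psi d0 d1 \<theta> (r i j t) \<ge> 0"
    using assms(1) unfolding good_def by (auto intro!: psi_nonneg)
  have "psi d0 d1 \<theta> (r i j t) \<le> (\<Sum>j\<in>{..<k} - {i}. psi d0 d1 \<theta> (r i j t))"
    using assms nn by (intro member_le_sum) auto
  also have "\<dots> \<le> (\<Sum>i<k. \<Sum>j\<in>{..<k} - {i}. psi d0 d1 \<theta> (r i j t))"
    using assms nn by (intro member_le_sum[where f="\<lambda>i. \<Sum>j\<in>{..<k} - {i}. psi d0 d1 \<theta> (r i j t)"] sum_nonneg) auto
  finally show ?thesis unfolding P_def by simp
qed

lemma all_good:
  assumes g0: "good 0"
  shows "\<forall>t\<ge>0. good t"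
proof (rule ccontr)
  assume "\<not> (\<forall>t\<ge>0. good t)"
  then obtain t1 where t1: "t1 \<ge> 0" "\<not> good t1" by auto
  define B where "B = {t. 0 \<le> t \<and> t \<le> t1 \<and> \<not> good t}"
  define T where "T = Inf B"
  have Bne: "B \<noteq> {}" using t1 unfolding B_def by auto
  have Bbdd: "bdd_below B" unfolding B_def by (rule bdd_belowI[of _ 0]) auto
  have T0: "T \<ge> 0" unfolding T_def using Bne by (intro cInf_greatest) (auto simp: B_def)
  have Tle: "\<And>b. b \<in> B \<Longrightarrow> T \<le> b" unfolding T_def using Bbdd by (intro cInf_lower)
  have T1: "T \<le> t1" using Tle[of t1] t1 by (simp add: B_def)
  have lt: "good \<tau>" if "0 \<le> \<tau>" "\<tau> < T" for \<tau>
  proof (rule ccontr)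
    assume "\<not> good \<tau>"
    then have "\<tau> \<in> B" using that T1 unfolding B_def by auto
    then show False using Tle that by fastforce
  qed
  define M where "M = 4 * (sqrt (W 0) + P 0)"
  define S where "S = {0..<T} \<union> {0}"
  have PM: "psi d0 d1 \<theta> (r i j \<tau>) \<le> M" and gS: "good \<tau>"
    if "\<tau> \<in> S" "i < k" "j < k" "i \<noteq> j" for \<tau> i j
  proof -
    have g: "\<forall>\<sigma>\<in>{0..\<tau>}. good \<sigma>" using that lt g0 unfolding S_def by auto
    then show "good \<tau>" using that unfolding S_def by auto
    have "\<tau> \<ge> 0" using that unfolding S_def by auto
    then have "P \<tau> \<le> sqrt (W 0) + P 0" using key g by blast
    then show "psi d0 d1 \<theta> (r i j \<tau>) \<le> M"
    proof -
      have "4 * P \<tau> \<le> 4 * (sqrt (W 0) + P 0)" using `P \<tau> \<le> _` by simp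
      then show ?thesis using psi_le_P[OF `good \<tau>` that(2-4)] M_def by linarith
    qed
  qed
  obtain i0 j0 where ij0: "i0 < k" "j0 < k" "i0 \<noteq> j0" 
  proof -
    have "0 < k" "1 < k" "(0::nat) \<noteq> 1" using k2 by auto
    then show ?thesis using that by blast
  qed
  have Mpos: "M > 0"
  proof -
    have "0 \<in> S" unfolding S_def by auto
    then have g: "d0 < r i0 j0 0" "r i0 j0 0 < d1" using gS[OF _ ij0] by (auto simp: good_def ij0)
    show ?thesis using psi_bound(1)[OF g th2 PM[OF `0 \<in> S` ij0]] .
  qed
  define c where "c = 1 / (M * real (\<theta> - 1))"
  have c0: "c > 0" unfolding c_def using Mpos th2 by simp
  have TS: "T \<in> closure S"
  proof (cases "T = 0")
    case True then show ?thesis unfolding S_def by (simp add: closure_def)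
  next
    case False
    then have "closure {0..<T} = {0..T}" using T0 by (intro closure_atLeastLessThan) auto
    moreover have "closure {0..<T} \<subseteq> closure S" unfolding S_def by (intro closure_mono) auto
    ultimately show ?thesis using T0 by auto
  qed
  have clS: "closure S \<subseteq> {0..}"
    unfolding S_def by (intro closure_minimal) auto
  have goodT: "good T"
    unfolding good_def
  proof (intro allI impI)
    fix i j assume ij: "i < k" "j < k" "i \<noteq> j"
    have A: "c \<le> (r i j T - d0) ^ (\<theta> - 1)"
    proof (rule continuous_ge_on_closure[OF _ TS])
      show "continuous_on (closure S) (\<lambda>\<tau>. (r i j \<tau> - d0) ^ (\<theta> - 1))"
        by (intro continuous_intros continuous_on_subset[OF rc clS] ij)
      fix \<tau> assume "\<tau> \<in> S"
      have g: "d0 < r i j \<tau>" "r i j \<tau> < d1" using gS[OF `\<tau> \<in> S` ij] ij unfolding good_def by auto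
      show "c \<le> (r i j \<tau> - d0) ^ (\<theta> - 1)" unfolding c_def
        using psi_bound(2)[OF g th2 PM[OF `\<tau> \<in> S` ij]] .
    qed
    have B': "c \<le> (d1 - r i j T) ^ (\<theta> - 1)"
    proof (rule continuous_ge_on_closure[OF _ TS])
      show "continuous_on (closure S) (\<lambda>\<tau>. (d1 - r i j \<tau>) ^ (\<theta> - 1))"
        by (intro continuous_intros continuous_on_subset[OF rc clS] ij)
      fix \<tau> assume "\<tau> \<in> S"
      have g: "d0 < r i j \<tau>" "r i j \<tau> < d1" using gS[OF `\<tau> \<in> S` ij] ij unfolding good_def by auto
      show "c \<le> (d1 - r i j \<tau>) ^ (\<theta> - 1)" unfolding c_def
        using psi_bound(3)[OF g th2 PM[OF `\<tau> \<in> S` ij]] .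
    qed
    have odd: "odd (\<theta> - 1)" using thev th2 by simp
    have "0 < (r i j T - d0) ^ (\<theta> - 1)" using A c0 by linarith
    then have "0 < r i j T - d0" using odd th2 by (simp add: zero_less_power_eq)
    moreover have "0 < (d1 - r i j T) ^ (\<theta> - 1)" using B' c0 by linarith
    then have "0 < d1 - r i j T" using odd th2 by (simp add: zero_less_power_eq)
    ultimately show "d0 < r i j T \<and> r i j T < d1" by simp
  qed
  have ev: "eventually (\<lambda>t. \<forall>p\<in>{..<k} \<times> {..<k}. fst p \<noteq> snd p \<longrightarrow>
              d0 < r (fst p) (snd p) t \<and> r (fst p) (snd p) t < d1) (at T within {0..})"
  proof (rule eventually_ball_finite)
    show "finite ({..<k} \<times> {..<k})" by simp
    show "\<forall>p\<in>{..<k} \<times> {..<k}. \<forall>\<^sub>F t in at T within {0..}. fst p \<noteq> snd p \<longrightarrow>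
              d0 < r (fst p) (snd p) t \<and> r (fst p) (snd p) t < d1"
    proof
      fix p assume p: "p \<in> {..<k} \<times> {..<k}"
      obtain i j where pij: "p = (i, j)" by (cases p)
      then have ij: "i < k" "j < k" using p by auto
      show "\<forall>\<^sub>F t in at T within {0..}. fst p \<noteq> snd p \<longrightarrow>
              d0 < r (fst p) (snd p) t \<and> r (fst p) (snd p) t < d1"
      proof (cases "i = j")
        case True then show ?thesis using pij by simp
      next
        case False
        have tl: "(r i j \<longlongrightarrow> r i j T) (at T within {0..})"
          using rc[OF ij] T0 unfolding continuous_on_def by auto
        have "d0 < r i j T" "r i j T < d1" using goodT ij False unfolding good_def by auto
        then have "eventually (\<lambda>t. d0 < r i j t) (at T within {0..})"
                  "eventually (\<lambda>t. r i j t < d1) (at T within {0..})"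
          using tl by (auto intro: order_tendstoD)
        then show ?thesis using pij by (auto elim: eventually_elim2)
      qed
    qed
  qed
  have "\<exists>\<eta>>0. \<forall>t\<in>{0..}. t \<noteq> T \<and> dist t T < \<eta> \<longrightarrow> good t"
  proof -
    from ev obtain \<eta> where \<eta>: "\<eta> > 0" and H: "\<forall>t\<in>{0..}. t \<noteq> T \<and> dist t T < \<eta> \<longrightarrow>
        (\<forall>p\<in>{..<k} \<times> {..<k}. fst p \<noteq> snd p \<longrightarrow> d0 < r (fst p) (snd p) t \<and> r (fst p) (snd p) t < d1)"
      unfolding eventually_at by blast
    have "good t" if "t \<in> {0..}" "t \<noteq> T" "dist t T < \<eta>" for t
      unfolding good_def
    proof (intro allI impI)
      fix i j assume "i < k" "j < k" "i \<noteq> j"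
      then show "d0 < r i j t \<and> r i j t < d1" using H that by force
    qed
    then show ?thesis using \<eta> by blast
  qed
  then obtain \<eta> where \<eta>: "\<eta> > 0" and H: "\<And>t. t \<ge> 0 \<Longrightarrow> t \<noteq> T \<Longrightarrow> dist t T < \<eta> \<Longrightarrow> good t" by auto
  have "Inf B < T + \<eta>" using \<eta> unfolding T_def by simp
  then obtain b where b: "b \<in> B" "b < T + \<eta>" using cInf_less_iff[OF Bne Bbdd] by auto
  have "T \<le> b" using Tle b by simp
  then have "good b"
  proof (cases "b = T")
    case True then show ?thesis using goodT by simp
  next
    case False then show ?thesis using H[of b] b `T \<le> b` T0 by (simp add: dist_real_def)
  qed
  then show False using b unfolding B_def by simp
qed

lemma final:
  assumes init: "\<And>i j. i < k \<Longrightarrow> j < k \<Longrightarrow> i \<noteq> j \<Longrightarrow>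
                 d0 < (norm (x i 0 - x j 0))\<^sup>2 \<and> (norm (x i 0 - x j 0))\<^sup>2 < d1"
  shows "\<forall>t\<ge>0. \<forall>i<k. \<forall>j<k. i \<noteq> j \<longrightarrow>
           d0 < (norm (x i t - x j t))\<^sup>2 \<and> (norm (x i t - x j t))\<^sup>2 < d1"
proof -
  have "good 0" unfolding good_def r_def using init by auto
  then have "\<forall>t\<ge>0. good t" by (rule all_good)
  then show ?thesis unfolding good_def r_def by blast
qed

end

theorem mainTheorem1:
  fixes k :: nat and K \<sigma> d0 d1 \<beta> :: real and \<theta> :: nat
    and x v :: "nat \<Rightarrow> real \<Rightarrow> 'a::euclidean_space"
  assumes "k \<ge> 2" and "K > 0" and "\<sigma> > 0" and "0 < d0" and "d0 < d1"
    and "0 < \<beta>" and "\<beta> \<le> 1/2" and "\<theta> > 0" and "even \<theta>"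
    and init: "\<And>i j. i < k \<Longrightarrow> j < k \<Longrightarrow> i \<noteq> j \<Longrightarrow>
                 d0 < (norm (x i 0 - x j 0))\<^sup>2 \<and> (norm (x i 0 - x j 0))\<^sup>2 < d1"
    and dx: "\<And>i t. i < k \<Longrightarrow> t \<ge> 0 \<Longrightarrow>
                 (x i has_vector_derivative v i t) (at t within {0..})"
    and dv: "\<And>i t. i < k \<Longrightarrow> t \<ge> 0 \<Longrightarrow>
                 (v i has_vector_derivative
                    flock_rhs k K \<sigma> \<beta> d0 d1 \<theta> (\<lambda>j. x j t) (\<lambda>j. v j t) i) (at t within {0..})"
  shows "\<forall>t\<ge>0. \<forall>i<k. \<forall>j<k. i \<noteq> j \<longrightarrow>
           d0 < (norm (x i t - x j t))\<^sup>2 \<and> (norm (x i t - x j t))\<^sup>2 < d1"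
proof -
  have th2: "\<theta> \<ge> 2" using assms(8,9) by (auto elim: evenE)
  note AG = final[where k=k and K=K and \<sigma>=\<sigma> and \<beta>=\<beta> and ?d0.0=d0 and ?d1.0=d1 and \<theta>=\<theta> and x=x and v=v]
  show ?thesis by (rule AG) (use assms th2 in auto)
qed

end
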